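(* Let $(S_0,S_1,\dots)$ be a supermartingale relative to a nondecreasing sequence of $\sigma$-algebras $H_{\le 0}\subseteq H_{\le 1}\subseteq\cdots$, with $S_0\le 0$ a.s. and differences $X_i:=S_i-S_{i-1}$, $i=1,2,\dots$. Suppose that for every $i=1,2,\dots$ there exist non-random constants $d_i>0$ and $\sigma_i>0$ such that $X_i\le d_i$ and $\operatorname{Var}(X_i\mid H_{\le i-1})\le\sigma_i^2$ a.s. Then for all $n=1,2,\dots$, $$\mathbf{E}f(S_n)\le\mathbf{E}f(T_n)\quad\text{for all } f\in\mathcal{F}_+^{(2)},$$ where $T_n:=Z_1+\dots+Z_n$ and $Z_1,\dots,Z_n$ are independent random variables with $\mathbf{P}(Z_i=d_i)=\frac{\sigma_i^2}{d_i^2+\sigma_i^2}$ and $\mathbf{P}(Z_i=-\sigma_i^2/d_i)=\frac{d_i^2}{d_i^2+\sigma_i^2}$ (so that $\mathbf{E}Z_i=0$ and $\operatorname{Var}Z_i=\sigma_i^2$).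
   Context: $\mathcal{F}_+^{(2)}$ denotes the class of all functions $f:\mathbb{R}\to\mathbb{R}$ of the form $f(u)=\int_{-\infty}^{\infty}(u-t)_+^2\,\mu(dt)$ for all $u\in\mathbb{R}$, for some Borel measure $\mu\ge0$ on $\mathbb{R}$, where $x_+:=\max(0,x)$. *)

theory Defs
  imports "HOL-Probability.Probability"
begin

text \<open>The class F_+^(2): functions u |-> integral of ((u - t)_+)^2 w.r.t. a Borel measure mu >= 0
  (real valued, so the integral is finite for every u).\<close>
definition F2plus :: "(real \<Rightarrow> real) set" where
  "F2plus = {f. \<exists>\<mu> :: real measure. sets \<mu> = sets borel \<and>
      (\<forall>u. ennreal (f u) = (\<integral>\<^sup>+ t. ennreal ((max 0 (u - t))\<^sup>2) \<partial>\<mu>))}"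

definition filtration :: "'a measure \<Rightarrow> (nat \<Rightarrow> 'a measure) \<Rightarrow> bool" where
  "filtration M H \<longleftrightarrow> (\<forall>i. subalgebra M (H i)) \<and> (\<forall>i j. i \<le> j \<longrightarrow> sets (H i) \<subseteq> sets (H j))"

definition supermartingale :: "'a measure \<Rightarrow> (nat \<Rightarrow> 'a measure) \<Rightarrow> (nat \<Rightarrow> 'a \<Rightarrow> real) \<Rightarrow> bool" where
  "supermartingale M H S \<longleftrightarrow> filtration M H \<and>
     (\<forall>i. S i \<in> borel_measurable (H i) \<and> integrable M (S i) \<and>
          (AE \<omega> in M. real_cond_exp M (H i) (S (Suc i)) \<omega> \<le> S i \<omega>))"

definition cond_var :: "'a measure \<Rightarrow> 'a measure \<Rightarrow> ('a \<Rightarrow> real) \<Rightarrow> ('a \<Rightarrow> ennreal)" where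
  "cond_var M F X = nn_cond_exp M F (\<lambda>\<omega>. ennreal ((X \<omega> - real_cond_exp M F X \<omega>)\<^sup>2))"

end

theory Submission
  imports Defs
begin


definition Gm :: "real \<Rightarrow> real \<Rightarrow> real \<Rightarrow> real" where
  "Gm d s w = s / (d\<^sup>2 + s) * (max 0 (w + d))\<^sup>2 + d\<^sup>2 / (d\<^sup>2 + s) * (max 0 (w - s / d))\<^sup>2"

definition Gam :: "real \<Rightarrow> real \<Rightarrow> real \<Rightarrow> real" where
  "Gam d s w = (if w + d \<le> 0 then 0 else if w \<ge> s / d then 1 else (w + d)\<^sup>2 / (d + s / d)\<^sup>2)"

definition X0 :: "real \<Rightarrow> real \<Rightarrow> real \<Rightarrow> real" where
  "X0 d s w = (if w + d \<le> 0 then 0 else if w \<ge> s / d then - w else - (s / d))"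

lemma Gam_bounds: assumes "d > 0" "s > 0" shows "0 \<le> Gam d s w" "Gam d s w \<le> 1"
proof -
  show "0 \<le> Gam d s w" unfolding Gam_def by auto
  show "Gam d s w \<le> 1"
  proof (cases "w + d \<le> 0 \<or> w \<ge> s / d")
    case True then show ?thesis unfolding Gam_def by auto
  next
    case False
    then have h: "0 < w + d" "w + d < d + s / d" by auto
    then have "(w + d)\<^sup>2 \<le> (d + s/d)\<^sup>2" by (intro power_mono) auto
    moreover have "d + s/d > 0" using assms by (metis add_pos_pos divide_pos_pos)
    then have "(d + s/d)\<^sup>2 > 0" by simp
    ultimately show ?thesis using False unfolding Gam_def by (auto simp add: divide_le_eq_1)
  qed
qed

lemma X0_bounds: assumes "d > 0" "s > 0" shows "X0 d s w \<le> 0" "\<bar>X0 d s w\<bar> \<le> \<bar>w\<bar> + s / d"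
  using assms unfolding X0_def by (auto simp: divide_nonneg_pos) (smt (verit) divide_pos_pos)+

lemma Gam_eq: assumes "d > 0" "s > 0" shows "Gam d s w * (s + (X0 d s w)\<^sup>2) = Gm d s w"
proof -
  have dd: "d\<^sup>2 + s > 0" using assms by (simp add: add_pos_pos)
  consider "w + d \<le> 0" | "\<not> w + d \<le> 0" "w \<ge> s / d" | "\<not> w + d \<le> 0" "\<not> w \<ge> s / d" by blast
  then show ?thesis
  proof cases
    case 1
    then have "w - s/d \<le> 0" using assms by (smt (verit) divide_pos_pos)
    then show ?thesis using 1 unfolding Gam_def X0_def Gm_def by (simp add: max_def)
  next
    case 2
    have "Gm d s w = s / (d\<^sup>2 + s) * (w + d)\<^sup>2 + d\<^sup>2 / (d\<^sup>2 + s) * (w - s / d)\<^sup>2"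
      using 2 unfolding Gm_def by (simp add: max_def)
    also have "d\<^sup>2 / (d\<^sup>2 + s) * (w - s / d)\<^sup>2 = (d * w - s)\<^sup>2 / (d\<^sup>2 + s)"
    proof -
      have "d * (w - s/d) = d * w - s" using assms by (simp add: right_diff_distrib)
      then have "d\<^sup>2 * (w - s/d)\<^sup>2 = (d * w - s)\<^sup>2" by (metis power_mult_distrib)
      then show ?thesis by simp
    qed
    also have "s / (d\<^sup>2 + s) * (w + d)\<^sup>2 + (d * w - s)\<^sup>2 / (d\<^sup>2 + s) = (s * (w + d)\<^sup>2 + (d * w - s)\<^sup>2) / (d\<^sup>2 + s)"
      by (simp add: add_divide_distrib)
    also have "s * (w + d)\<^sup>2 + (d * w - s)\<^sup>2 = (s + w\<^sup>2) * (d\<^sup>2 + s)"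
      by (simp add: power2_eq_square algebra_simps)
    also have "(s + w\<^sup>2) * (d\<^sup>2 + s) / (d\<^sup>2 + s) = s + w\<^sup>2" using dd by simp
    finally show ?thesis using 2 unfolding Gam_def X0_def by simp
  next
    case 3
    have "Gm d s w = s / (d\<^sup>2 + s) * (w + d)\<^sup>2"
      using 3 unfolding Gm_def by (simp add: max_def)
    also have "\<dots> = (w + d)\<^sup>2 / (d + s / d)\<^sup>2 * (s + (s/d)\<^sup>2)"
    proof -
      have e1: "(d + s / d)\<^sup>2 = (d\<^sup>2 + s)\<^sup>2 / d\<^sup>2" using assms by (simp add: power2_eq_square field_simps)
      have e2: "s + (s/d)\<^sup>2 = s * (d\<^sup>2 + s) / d\<^sup>2" using assms by (simp add: power2_eq_square field_simps)
      have "(w + d)\<^sup>2 / ((d\<^sup>2 + s)\<^sup>2 / d\<^sup>2) * (s * (d\<^sup>2 + s) / d\<^sup>2)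
          = (w + d)\<^sup>2 * s * ((d\<^sup>2 + s) * d\<^sup>2) / ((d\<^sup>2 + s) * (d\<^sup>2 + s) * d\<^sup>2)"
        by (simp add: power2_eq_square)
      also have "\<dots> = (w + d)\<^sup>2 * s / (d\<^sup>2 + s)" using assms dd
        by (simp add: mult.assoc[symmetric])
      finally show ?thesis unfolding e1 e2 by simp
    qed
    finally show ?thesis using 3 unfolding Gam_def X0_def by simp
  qed
qed

lemma majorant: assumes "d > 0" "s > 0" "x \<le> d" "m \<le> 0"
  shows "(max 0 (w + x))\<^sup>2 \<le> Gam d s w * (x - min m (X0 d s w))\<^sup>2"
proof -
  consider "w + d \<le> 0" | "\<not> w + d \<le> 0" "w \<ge> s / d" | "\<not> w + d \<le> 0" "\<not> w \<ge> s / d" by blast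
  then show ?thesis
  proof cases
    case 1
    then show ?thesis using assms unfolding Gam_def X0_def by (simp add: max_def)
  next
    case 2
    then have G: "Gam d s w = 1" "X0 d s w = -w" unfolding Gam_def X0_def by auto
    show ?thesis
    proof (cases "w + x \<le> 0")
      case True then show ?thesis using G by (simp add: max_def)
    next
      case False
      then have "0 \<le> w + x" "w + x \<le> x - min m (-w)" by auto
      then have "(w + x)\<^sup>2 \<le> (x - min m (-w))\<^sup>2" by (intro power_mono) auto
      then show ?thesis using G False by (simp add: max_def)
    qed
  next
    case 3
    let ?c = "s / d"
    have cpos: "?c > 0" using assms by simp
    have G: "Gam d s w = (w + d)\<^sup>2 / (d + ?c)\<^sup>2" "X0 d s w = - ?c" using 3 unfolding Gam_def X0_def by auto
    show ?thesis
    proof (cases "w + x \<le> 0")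
      case True then show ?thesis using G by (simp add: max_def)
    next
      case False
      have wd: "0 < w + d" "w < ?c" using 3 by auto
      have dc: "d + ?c > 0" using assms cpos by linarith
      have lin: "w + x \<le> (w + d) * (x + ?c) / (d + ?c)"
      proof -
        have "(w + x) * (d + ?c) \<le> (w + d) * (x + ?c)"
        proof -
          have "(w + d) * (x + ?c) - (w + x) * (d + ?c) = (d - x) * (?c - w)" using assms by (simp add: field_simps)
          moreover have "(d - x) * (?c - w) \<ge> 0" using assms wd by simp
          ultimately show ?thesis by linarith
        qed
        then show ?thesis using dc by (simp add: le_divide_eq)
      qed
      have "x + ?c \<le> x - min m (- ?c)" by simp
      moreover have "0 \<le> x + ?c" using False wd by linarith
      ultimately have "(w + d) * (x + ?c) / (d + ?c) \<le> (w + d) * (x - min m (- ?c)) / (d + ?c)"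
        using wd dc by (intro divide_right_mono mult_left_mono) auto
      with lin have "w + x \<le> (w + d) * (x - min m (- ?c)) / (d + ?c)" by linarith
      then have "(w + x)\<^sup>2 \<le> ((w + d) * (x - min m (- ?c)) / (d + ?c))\<^sup>2"
        using False by (intro power_mono) auto
      also have "\<dots> = (w + d)\<^sup>2 / (d + ?c)\<^sup>2 * (x - min m (- ?c))\<^sup>2"
        by (simp add: power_divide power_mult_distrib)
      finally show ?thesis using G False by (simp add: max_def)
    qed
  qed
qed




lemma Gam_meas[measurable]: "Gam d s \<in> borel_measurable borel"
  unfolding Gam_def by measurable
lemma X0_meas[measurable]: "X0 d s \<in> borel_measurable borel"
  unfolding X0_def by measurable
lemma Gm_meas[measurable]: "Gm d s \<in> borel_measurable borel"
  unfolding Gm_def by measurable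
lemma Gm_nonneg: "d > 0 \<Longrightarrow> s > 0 \<Longrightarrow> Gm d s w \<ge> 0"
  unfolding Gm_def by (intro add_nonneg_nonneg mult_nonneg_nonneg) auto

lemma one_step:
  fixes M F :: "'a measure" and X Y :: "'a \<Rightarrow> real"
  assumes P: "prob_space M" and sub: "subalgebra M F"
    and Ym[measurable]: "Y \<in> borel_measurable F" and Xm[measurable]: "X \<in> borel_measurable M"
    and Xi: "integrable M X"
    and Xd: "AE \<omega> in M. X \<omega> \<le> d" and Xc: "AE \<omega> in M. real_cond_exp M F X \<omega> \<le> 0"
    and Xv: "AE \<omega> in M. cond_var M F X \<omega> \<le> ennreal s" and dpos: "d > 0" and spos: "s > 0"
  shows "(\<integral>\<^sup>+\<omega>. ennreal ((max 0 (Y \<omega> + X \<omega> - r))\<^sup>2) \<partial>M) \<le> (\<integral>\<^sup>+\<omega>. ennreal (Gm d s (Y \<omega> - r)) \<partial>M)"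
proof -
  interpret prob_space M by fact
  interpret sigma_finite_subalgebra M F
    by (rule finite_measure_subalgebra_is_sigma_finite)
       (simp add: finite_measure_subalgebra_def finite_measure_subalgebra_axioms_def sub finite_measure_axioms)
  have YM[measurable]: "Y \<in> borel_measurable M" using measurable_from_subalg[OF subalg Ym] .
  define m where "m = real_cond_exp M F X"
  have mF[measurable]: "m \<in> borel_measurable F" and mM[measurable]: "m \<in> borel_measurable M"
    unfolding m_def by auto
  have mi: "integrable M m" unfolding m_def using Xi by auto
  define g where "g = (\<lambda>\<omega>. Gam d s (Y \<omega> - r))"
  define x0 where "x0 = (\<lambda>\<omega>. X0 d s (Y \<omega> - r))"
  define D where "D = (\<lambda>\<omega>. max 0 (min (m \<omega>) 0 - x0 \<omega>))"
  have [measurable]: "g \<in> borel_measurable F" "x0 \<in> borel_measurable F" "D \<in> borel_measurable F"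
    unfolding g_def x0_def D_def by measurable
  have [measurable]: "g \<in> borel_measurable M" "x0 \<in> borel_measurable M" "D \<in> borel_measurable M"
    unfolding g_def x0_def D_def by measurable
  have g01: "0 \<le> g \<omega>" "g \<omega> \<le> 1" for \<omega> unfolding g_def using Gam_bounds[OF dpos spos] by auto
  have x0b: "x0 \<omega> \<le> 0" "\<bar>x0 \<omega>\<bar> \<le> \<bar>Y \<omega>\<bar> + \<bar>r\<bar> + s / d" for \<omega>
    unfolding x0_def using X0_bounds[OF dpos spos, of "Y \<omega> - r"] by auto
  have Db: "0 \<le> D \<omega>" "D \<omega> \<le> - x0 \<omega>" for \<omega> unfolding D_def using x0b[of \<omega>] by auto
  have sqfin: "(\<integral>\<^sup>+\<omega>. ennreal ((X \<omega> - m \<omega>)\<^sup>2) \<partial>M) \<le> ennreal s"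
  proof -
    have "(\<integral>\<^sup>+\<omega>. ennreal ((X \<omega> - m \<omega>)\<^sup>2) \<partial>M) = (\<integral>\<^sup>+\<omega>. 1 * ennreal ((X \<omega> - m \<omega>)\<^sup>2) \<partial>M)" by simp
    also have "\<dots> = (\<integral>\<^sup>+\<omega>. 1 * cond_var M F X \<omega> \<partial>M)"
      unfolding cond_var_def m_def by (rule nn_cond_exp_intg[symmetric]) auto
    also have "\<dots> \<le> (\<integral>\<^sup>+\<omega>. ennreal s \<partial>M)" by (rule nn_integral_mono_AE) (use Xv in simp)
    also have "\<dots> = ennreal s" by (simp add: emeasure_space_1)
    finally show ?thesis .
  qed
  have sqi: "integrable M (\<lambda>\<omega>. (X \<omega> - m \<omega>)\<^sup>2)"
    by (rule integrableI_nonneg) (use sqfin in \<open>auto simp: less_top[symmetric] top_unique\<close>)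
  have Xmi: "integrable M (\<lambda>\<omega>. X \<omega> - m \<omega>)" using Xi mi by auto
  define G where "G = (\<lambda>\<omega>. (max 0 (Y \<omega> + X \<omega> - r))\<^sup>2)"
  have [measurable]: "G \<in> borel_measurable M" unfolding G_def by measurable
  define A where "A = (\<lambda>K::nat. {\<omega> \<in> space M. \<bar>Y \<omega>\<bar> \<le> real K})"
  have AF[measurable]: "A K \<in> sets F" for K unfolding A_def
  proof -
    have "{\<omega> \<in> space M. \<bar>Y \<omega>\<bar> \<le> real K} = {\<omega> \<in> space F. \<bar>Y \<omega>\<bar> \<le> real K}"
      using subalg by (simp add: subalgebra_def)
    then show "{\<omega> \<in> space M. \<bar>Y \<omega>\<bar> \<le> real K} \<in> sets F" by simp
  qed
  have AM[measurable]: "A K \<in> sets M" for K unfolding A_def by measurable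
  have main: "(\<integral>\<^sup>+\<omega>. ennreal (indicator (A K) \<omega> * G \<omega>) \<partial>M) \<le> (\<integral>\<^sup>+\<omega>. ennreal (Gm d s (Y \<omega> - r)) \<partial>M)" for K
  proof -
    define J where "J = (\<lambda>\<omega>. indicator (A K) \<omega> :: real)"
    have [measurable]: "J \<in> borel_measurable F" "J \<in> borel_measurable M" unfolding J_def by measurable
    define B where "B = real K + \<bar>r\<bar> + s / d"
    have J01: "0 \<le> J \<omega>" "J \<omega> \<le> 1" for \<omega> unfolding J_def by (auto simp: indicator_def)
    define \<phi> where "\<phi> = (\<lambda>\<omega>. J \<omega> * g \<omega>)"
    define \<psi> where "\<psi> = (\<lambda>\<omega>. J \<omega> * g \<omega> * D \<omega>)"
    have [measurable]: "\<phi> \<in> borel_measurable F" "\<psi> \<in> borel_measurable F"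
      "\<phi> \<in> borel_measurable M" "\<psi> \<in> borel_measurable M" unfolding \<phi>_def \<psi>_def by measurable
    have phi01: "0 \<le> \<phi> \<omega>" "\<phi> \<omega> \<le> 1" for \<omega>
      unfolding \<phi>_def using J01[of \<omega>] g01[of \<omega>] by (auto intro: mult_le_one)
    have Jx0: "J \<omega> * \<bar>x0 \<omega>\<bar> \<le> B" for \<omega>
    proof (cases "\<omega> \<in> A K")
      case True
      then have "\<bar>Y \<omega>\<bar> \<le> real K" unfolding A_def by auto
      then show ?thesis using True x0b[of \<omega>] unfolding J_def B_def by auto
    next
      case False
      then show ?thesis unfolding J_def B_def using spos dpos by (auto simp: divide_nonneg_pos)
    qed
    have B0: "0 \<le> B" unfolding B_def using spos dpos by (auto simp: divide_nonneg_pos)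
    have psib: "0 \<le> \<psi> \<omega>" "\<psi> \<omega> \<le> B" for \<omega>
    proof -
      show "0 \<le> \<psi> \<omega>" unfolding \<psi>_def using J01[of \<omega>] g01[of \<omega>] Db[of \<omega>] by auto
      have "J \<omega> * g \<omega> \<le> J \<omega>" using J01[of \<omega>] g01[of \<omega>] by (simp add: mult_left_le)
      then have "\<psi> \<omega> \<le> J \<omega> * D \<omega>" unfolding \<psi>_def using Db[of \<omega>]
        by (intro mult_right_mono) auto
      also have "\<dots> \<le> J \<omega> * \<bar>x0 \<omega>\<bar>" using J01[of \<omega>] Db[of \<omega>] by (intro mult_left_mono) auto
      finally show "\<psi> \<omega> \<le> B" using Jx0[of \<omega>] by linarith
    qed
    have phix0: "\<phi> \<omega> * (x0 \<omega>)\<^sup>2 \<le> B\<^sup>2" for \<omega>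
    proof -
      have "J \<omega> * g \<omega> \<le> J \<omega>" using J01[of \<omega>] g01[of \<omega>] by (simp add: mult_left_le)
      then have "\<phi> \<omega> * (x0 \<omega>)\<^sup>2 \<le> J \<omega> * (x0 \<omega>)\<^sup>2" unfolding \<phi>_def
        by (intro mult_right_mono) auto
      also have "\<dots> = (J \<omega> * \<bar>x0 \<omega>\<bar>)\<^sup>2" unfolding J_def by (simp add: indicator_def power2_eq_square)
      also have "\<dots> \<le> B\<^sup>2" using Jx0[of \<omega>] J01[of \<omega>] by (intro power_mono) auto
      finally show ?thesis .
    qed
    define Q where "Q = (\<lambda>\<omega>. \<phi> \<omega> * (X \<omega> - m \<omega>)\<^sup>2 + 2 * (\<psi> \<omega> * (X \<omega> - m \<omega>)) + \<psi> \<omega> * D \<omega>)"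
    have i1: "integrable M (\<lambda>\<omega>. \<phi> \<omega> * (X \<omega> - m \<omega>)\<^sup>2)"
      by (rule Bochner_Integration.integrable_bound[OF sqi]) (use phi01 in \<open>auto intro!: mult_left_le_one_le\<close>)
    have i2: "integrable M (\<lambda>\<omega>. \<psi> \<omega> * (X \<omega> - m \<omega>))"
      by (rule Bochner_Integration.integrable_bound[where f="\<lambda>\<omega>. B * (X \<omega> - m \<omega>)"])
         (use Xmi psib B0 in \<open>auto simp: abs_mult intro!: mult_right_mono\<close>)
    have i2X: "integrable M (\<lambda>\<omega>. \<psi> \<omega> * X \<omega>)"
      by (rule Bochner_Integration.integrable_bound[where f="\<lambda>\<omega>. B * X \<omega>"])
         (use Xi psib B0 in \<open>auto simp: abs_mult intro!: mult_right_mono\<close>)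
    have psiD: "0 \<le> \<psi> \<omega> * D \<omega>" "\<psi> \<omega> * D \<omega> \<le> B * B" for \<omega>
    proof -
      show "0 \<le> \<psi> \<omega> * D \<omega>" using psib Db by simp
      show "\<psi> \<omega> * D \<omega> \<le> B * B"
      proof (cases "\<omega> \<in> A K")
        case True
        then have "\<bar>Y \<omega>\<bar> \<le> real K" unfolding A_def by auto
        then have "D \<omega> \<le> B" using Db[of \<omega>] x0b[of \<omega>] unfolding B_def by linarith
        then show ?thesis using psib[of \<omega>] Db[of \<omega>] by (intro mult_mono) auto
      next
        case False
        then show ?thesis unfolding \<psi>_def J_def by simp
      qed
    qed
    have i3: "integrable M (\<lambda>\<omega>. \<psi> \<omega> * D \<omega>)"
      by (rule integrable_const_bound[where B="B * B"]) (use psiD in auto)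
    have cross: "(\<integral>\<omega>. \<psi> \<omega> * (X \<omega> - m \<omega>) \<partial>M) = 0"
    proof -
      have c1: "integrable M (\<lambda>\<omega>. \<psi> \<omega> * m \<omega>)" "(\<integral>\<omega>. \<psi> \<omega> * m \<omega> \<partial>M) = (\<integral>\<omega>. \<psi> \<omega> * X \<omega> \<partial>M)"
        unfolding m_def using real_cond_exp_intg[OF i2X] by auto
      have "(\<integral>\<omega>. \<psi> \<omega> * (X \<omega> - m \<omega>) \<partial>M) = (\<integral>\<omega>. \<psi> \<omega> * X \<omega> - \<psi> \<omega> * m \<omega> \<partial>M)"
        by (simp add: right_diff_distrib)
      also have "\<dots> = (\<integral>\<omega>. \<psi> \<omega> * X \<omega> \<partial>M) - (\<integral>\<omega>. \<psi> \<omega> * m \<omega> \<partial>M)"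
        using i2X c1(1) by (rule Bochner_Integration.integral_diff)
      finally show ?thesis using c1(2) by simp
    qed
    have iS: "integrable M (\<lambda>\<omega>. \<phi> \<omega> * s)"
      by (rule integrable_const_bound[where B="s"]) (use phi01 spos in \<open>auto simp: abs_mult intro!: mult_left_le_one_le\<close>)
    have ix: "integrable M (\<lambda>\<omega>. \<phi> \<omega> * (x0 \<omega>)\<^sup>2)"
      by (rule integrable_const_bound[where B="B\<^sup>2"]) (use phix0 phi01 in \<open>auto simp: abs_mult\<close>)
    have t1: "(\<integral>\<omega>. \<phi> \<omega> * (X \<omega> - m \<omega>)\<^sup>2 \<partial>M) \<le> (\<integral>\<omega>. \<phi> \<omega> * s \<partial>M)"
    proof -
      have "ennreal (\<integral>\<omega>. \<phi> \<omega> * (X \<omega> - m \<omega>)\<^sup>2 \<partial>M) = (\<integral>\<^sup>+\<omega>. ennreal (\<phi> \<omega> * (X \<omega> - m \<omega>)\<^sup>2) \<partial>M)"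
        by (rule nn_integral_eq_integral[symmetric]) (use i1 phi01 in auto)
      also have "\<dots> = (\<integral>\<^sup>+\<omega>. ennreal (\<phi> \<omega>) * ennreal ((X \<omega> - m \<omega>)\<^sup>2) \<partial>M)"
        using phi01 by (simp add: ennreal_mult)
      also have "\<dots> = (\<integral>\<^sup>+\<omega>. ennreal (\<phi> \<omega>) * cond_var M F X \<omega> \<partial>M)"
        unfolding cond_var_def m_def by (rule nn_cond_exp_intg[symmetric]) auto
      also have "\<dots> \<le> (\<integral>\<^sup>+\<omega>. ennreal (\<phi> \<omega>) * ennreal s \<partial>M)"
      proof (rule nn_integral_mono_AE)
        show "AE \<omega> in M. ennreal (\<phi> \<omega>) * cond_var M F X \<omega> \<le> ennreal (\<phi> \<omega>) * ennreal s"
          using Xv by eventually_elim (rule mult_left_mono, auto)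
      qed
      also have "\<dots> = (\<integral>\<^sup>+\<omega>. ennreal (\<phi> \<omega> * s) \<partial>M)"
        using phi01 spos by (simp add: ennreal_mult)
      also have "\<dots> = ennreal (\<integral>\<omega>. \<phi> \<omega> * s \<partial>M)"
        by (rule nn_integral_eq_integral) (use iS phi01 spos in auto)
      finally show ?thesis
        using phi01 spos by (subst (asm) ennreal_le_iff) (auto intro!: integral_nonneg_AE)
    qed
    have t3: "(\<integral>\<omega>. \<psi> \<omega> * D \<omega> \<partial>M) \<le> (\<integral>\<omega>. \<phi> \<omega> * (x0 \<omega>)\<^sup>2 \<partial>M)"
    proof (rule Bochner_Integration.integral_mono[OF i3 ix])
      fix \<omega>
      have "(D \<omega>)\<^sup>2 \<le> (x0 \<omega>)\<^sup>2" using Db[of \<omega>] by (metis abs_le_square_iff abs_of_nonneg abs_of_nonpos abs_minus_cancel x0b(1))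
      then have "\<phi> \<omega> * (D \<omega>)\<^sup>2 \<le> \<phi> \<omega> * (x0 \<omega>)\<^sup>2" using phi01 by (intro mult_left_mono) auto
      then show "\<psi> \<omega> * D \<omega> \<le> \<phi> \<omega> * (x0 \<omega>)\<^sup>2" unfolding \<psi>_def \<phi>_def by (simp add: power2_eq_square mult.assoc)
    qed
    have Qeq: "Q \<omega> = J \<omega> * g \<omega> * (X \<omega> - m \<omega> + D \<omega>)\<^sup>2" for \<omega>
      unfolding Q_def \<phi>_def \<psi>_def by (simp add: power2_eq_square algebra_simps)
    have Qnn: "0 \<le> Q \<omega>" for \<omega> unfolding Qeq using J01 g01 by simp
    have iQ: "integrable M Q" unfolding Q_def using i1 i2 i3 by auto
    have intQ: "(\<integral>\<omega>. Q \<omega> \<partial>M) \<le> (\<integral>\<omega>. J \<omega> * Gm d s (Y \<omega> - r) \<partial>M)"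
    proof -
      have "(\<integral>\<omega>. Q \<omega> \<partial>M) = (\<integral>\<omega>. \<phi> \<omega> * (X \<omega> - m \<omega>)\<^sup>2 \<partial>M) + 2 * (\<integral>\<omega>. \<psi> \<omega> * (X \<omega> - m \<omega>) \<partial>M) + (\<integral>\<omega>. \<psi> \<omega> * D \<omega> \<partial>M)"
        unfolding Q_def using i1 i2 i3 by simp
      also have "\<dots> \<le> (\<integral>\<omega>. \<phi> \<omega> * s \<partial>M) + (\<integral>\<omega>. \<phi> \<omega> * (x0 \<omega>)\<^sup>2 \<partial>M)"
        using t1 t3 cross by simp
      also have "\<dots> = (\<integral>\<omega>. \<phi> \<omega> * s + \<phi> \<omega> * (x0 \<omega>)\<^sup>2 \<partial>M)" using iS ix by simp
      also have "\<dots> = (\<integral>\<omega>. J \<omega> * Gm d s (Y \<omega> - r) \<partial>M)"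
      proof (rule Bochner_Integration.integral_cong[OF refl])
        fix \<omega>
        show "\<phi> \<omega> * s + \<phi> \<omega> * (x0 \<omega>)\<^sup>2 = J \<omega> * Gm d s (Y \<omega> - r)"
          unfolding \<phi>_def g_def x0_def Gam_eq[OF dpos spos, symmetric] by (simp add: algebra_simps)
      qed
      finally show ?thesis .
    qed
    have iJG: "integrable M (\<lambda>\<omega>. J \<omega> * Gm d s (Y \<omega> - r))"
    proof -
      have "(\<lambda>\<omega>. J \<omega> * Gm d s (Y \<omega> - r)) = (\<lambda>\<omega>. \<phi> \<omega> * s + \<phi> \<omega> * (x0 \<omega>)\<^sup>2)"
        unfolding \<phi>_def g_def x0_def Gam_eq[OF dpos spos, symmetric] by (simp add: algebra_simps)
      then show ?thesis using iS ix by simp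
    qed
    have AEQ: "AE \<omega> in M. J \<omega> * G \<omega> \<le> Q \<omega>"
      using Xd Xc
    proof eventually_elim
      case (elim \<omega>)
      have mm: "min (m \<omega>) (x0 \<omega>) = m \<omega> - D \<omega>" using elim unfolding D_def m_def by auto
      have "G \<omega> \<le> g \<omega> * (X \<omega> - min (m \<omega>) (x0 \<omega>))\<^sup>2"
        unfolding G_def g_def x0_def using majorant[OF dpos spos elim(1), of "m \<omega>" "Y \<omega> - r"] elim(2)
        unfolding m_def by (simp add: algebra_simps)
      then have "J \<omega> * G \<omega> \<le> J \<omega> * (g \<omega> * (X \<omega> - m \<omega> + D \<omega>)\<^sup>2)"
        using J01 unfolding mm by (intro mult_left_mono) (auto simp: algebra_simps)
      then show ?case unfolding Qeq by (simp add: mult.assoc)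
    qed
    have "(\<integral>\<^sup>+\<omega>. ennreal (J \<omega> * G \<omega>) \<partial>M) \<le> (\<integral>\<^sup>+\<omega>. ennreal (Q \<omega>) \<partial>M)"
      by (rule nn_integral_mono_AE) (use AEQ in \<open>auto intro: ennreal_leI\<close>)
    also have "\<dots> = ennreal (\<integral>\<omega>. Q \<omega> \<partial>M)" by (rule nn_integral_eq_integral) (use iQ Qnn in auto)
    also have "\<dots> \<le> ennreal (\<integral>\<omega>. J \<omega> * Gm d s (Y \<omega> - r) \<partial>M)" using intQ by (rule ennreal_leI)
    also have "\<dots> = (\<integral>\<^sup>+\<omega>. ennreal (J \<omega> * Gm d s (Y \<omega> - r)) \<partial>M)"
      by (rule nn_integral_eq_integral[symmetric]) (use iJG J01 Gm_nonneg[OF dpos spos] in auto)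
    also have "\<dots> \<le> (\<integral>\<^sup>+\<omega>. ennreal (Gm d s (Y \<omega> - r)) \<partial>M)"
    proof (rule nn_integral_mono)
      fix \<omega>
      show "ennreal (J \<omega> * Gm d s (Y \<omega> - r)) \<le> ennreal (Gm d s (Y \<omega> - r))"
        using J01[of \<omega>] Gm_nonneg[OF dpos spos, of "Y \<omega> - r"] by (intro ennreal_leI mult_left_le_one_le) auto
    qed
    finally show ?thesis unfolding J_def .
  qed
  have Gnn: "0 \<le> G \<omega>" for \<omega> unfolding G_def by simp
  have inc: "incseq (\<lambda>K \<omega>. ennreal (indicator (A K) \<omega> * G \<omega>))"
  proof (rule incseq_SucI, rule le_funI)
    fix K \<omega>
    have "indicator (A K) \<omega> \<le> (indicator (A (Suc K)) \<omega> :: real)"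
      unfolding A_def by (auto simp: indicator_def)
    then show "ennreal (indicator (A K) \<omega> * G \<omega>) \<le> ennreal (indicator (A (Suc K)) \<omega> * G \<omega>)"
      using Gnn[of \<omega>] by (intro ennreal_leI mult_right_mono) auto
  qed
  have sup: "(SUP K. ennreal (indicator (A K) \<omega> * G \<omega>)) = ennreal (G \<omega>)" if "\<omega> \<in> space M" for \<omega>
  proof (rule antisym)
    show "(SUP K. ennreal (indicator (A K) \<omega> * G \<omega>)) \<le> ennreal (G \<omega>)"
      using Gnn[of \<omega>] by (intro SUP_least ennreal_leI) (auto simp: indicator_def)
    have "\<bar>Y \<omega>\<bar> \<le> real (nat \<lceil>\<bar>Y \<omega>\<bar>\<rceil>)" by (rule real_nat_ceiling_ge)
    then have "\<omega> \<in> A (nat \<lceil>\<bar>Y \<omega>\<bar>\<rceil>)" unfolding A_def using that by auto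
    then show "ennreal (G \<omega>) \<le> (SUP K. ennreal (indicator (A K) \<omega> * G \<omega>))"
      by (intro SUP_upper2[of "nat \<lceil>\<bar>Y \<omega>\<bar>\<rceil>"]) auto
  qed
  have "(\<integral>\<^sup>+\<omega>. ennreal (G \<omega>) \<partial>M) = (\<integral>\<^sup>+\<omega>. (SUP K. ennreal (indicator (A K) \<omega> * G \<omega>)) \<partial>M)"
    by (rule nn_integral_cong) (simp add: sup)
  also have "\<dots> = (SUP K. (\<integral>\<^sup>+\<omega>. ennreal (indicator (A K) \<omega> * G \<omega>) \<partial>M))"
    by (rule nn_integral_monotone_convergence_SUP[OF inc]) measurable
  also have "\<dots> \<le> (\<integral>\<^sup>+\<omega>. ennreal (Gm d s (Y \<omega> - r)) \<partial>M)"
    by (rule SUP_least) (rule main)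
  finally show ?thesis unfolding G_def by (simp add: algebra_simps)
qed




definition cls :: "(real \<times> real) list \<Rightarrow> real \<Rightarrow> real" where
  "cls L x = (\<Sum>(a, r)\<leftarrow>L. a * (max 0 (x - r))\<^sup>2)"

definition Aop :: "real \<Rightarrow> real \<Rightarrow> (real \<Rightarrow> real) \<Rightarrow> real \<Rightarrow> real" where
  "Aop d s h y = s / (d\<^sup>2 + s) * h (y + d) + d\<^sup>2 / (d\<^sup>2 + s) * h (y - s / d)"

definition nnw :: "(real \<times> real) list \<Rightarrow> bool" where
  "nnw L \<longleftrightarrow> (\<forall>p\<in>set L. fst p \<ge> 0)"

lemma cls_Nil[simp]: "cls [] x = 0" by (simp add: cls_def)
lemma cls_Cons[simp]: "cls ((a, r) # L) x = a * (max 0 (x - r))\<^sup>2 + cls L x" by (simp add: cls_def)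
lemma nnw_Nil[simp]: "nnw []" by (simp add: nnw_def)
lemma nnw_Cons[simp]: "nnw ((a, r) # L) \<longleftrightarrow> a \<ge> 0 \<and> nnw L" by (auto simp add: nnw_def)

lemma cls_nonneg: "nnw L \<Longrightarrow> 0 \<le> cls L x"
  by (induction L rule: list.induct) (auto simp: split_beta)

lemma cls_mono: "nnw L \<Longrightarrow> x \<le> y \<Longrightarrow> cls L x \<le> cls L y"
proof (induction L)
  case Nil then show ?case by simp
next
  case (Cons p L)
  obtain a r where p: "p = (a, r)" by (cases p)
  have "(max 0 (x - r))\<^sup>2 \<le> (max 0 (y - r))\<^sup>2" using Cons.prems by (intro power_mono) auto
  then have "a * (max 0 (x - r))\<^sup>2 \<le> a * (max 0 (y - r))\<^sup>2" using Cons.prems p by (intro mult_left_mono) auto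
  then show ?case using Cons p by auto
qed

lemma cls_meas[measurable]: "cls L \<in> borel_measurable borel"
proof (induction L)
  case Nil then show ?case by (simp add: cls_def)
next
  case (Cons p L)
  obtain a r where p: "p = (a, r)" by (cases p)
  have e: "cls (p # L) = (\<lambda>x. a * (max 0 (x - r))\<^sup>2 + cls L x)" using p by (simp add: fun_eq_iff)
  show ?case unfolding e using Cons by measurable
qed

lemma Aop_cls: "Aop d s (cls L) y = (\<Sum>(a, r)\<leftarrow>L. a * Gm d s (y - r))"
proof (induction L)
  case Nil then show ?case by (simp add: Aop_def)
next
  case (Cons p L)
  obtain a r where p: "p = (a, r)" by (cases p)
  have "Aop d s (cls (p # L)) y = a * Gm d s (y - r) + Aop d s (cls L) y"
    unfolding p Aop_def Gm_def by (simp add: algebra_simps)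
  also have "\<dots> = (\<Sum>(a, r)\<leftarrow>p # L. a * Gm d s (y - r))" using Cons.IH p by simp
  finally show ?case .
qed

lemma Aop_cls_ex:
  assumes "nnw L" "d > 0" "s > 0"
  shows "\<exists>L'. nnw L' \<and> Aop d s (cls L) = cls L'"
  using assms(1)
proof (induction L)
  case Nil then show ?case by (intro exI[of _ "[]"]) (simp add: Aop_def fun_eq_iff)
next
  case (Cons p L)
  obtain a r where p: "p = (a, r)" by (cases p)
  from Cons p obtain L' where L': "nnw L'" "Aop d s (cls L) = cls L'" by auto
  let ?L = "(s / (d\<^sup>2 + s) * a, r - d) # (d\<^sup>2 / (d\<^sup>2 + s) * a, r + s / d) # L'"
  have "Aop d s (cls (p # L)) y = cls ?L y" for y
  proof -
    have "Aop d s (cls (p # L)) y = s / (d\<^sup>2 + s) * a * (max 0 (y + d - r))\<^sup>2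
       + d\<^sup>2 / (d\<^sup>2 + s) * a * (max 0 (y - s / d - r))\<^sup>2 + Aop d s (cls L) y"
      unfolding p Aop_def by (simp add: algebra_simps)
    then show ?thesis using L' by (simp add: algebra_simps)
  qed
  moreover have "nnw ?L" using L' Cons.prems p assms by (auto intro!: mult_nonneg_nonneg add_nonneg_nonneg)
  ultimately show ?case by blast
qed

lemma one_step_cls:
  fixes M F :: "'a measure" and X Y :: "'a \<Rightarrow> real"
  assumes P: "prob_space M" and sub: "subalgebra M F"
    and Ym[measurable]: "Y \<in> borel_measurable F" and Xm[measurable]: "X \<in> borel_measurable M"
    and Xi: "integrable M X"
    and Xd: "AE \<omega> in M. X \<omega> \<le> d" and Xc: "AE \<omega> in M. real_cond_exp M F X \<omega> \<le> 0"
    and Xv: "AE \<omega> in M. cond_var M F X \<omega> \<le> ennreal s" and dpos: "d > 0" and spos: "s > 0"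
    and L: "nnw L"
  shows "(\<integral>\<^sup>+\<omega>. ennreal (cls L (Y \<omega> + X \<omega>)) \<partial>M) \<le> (\<integral>\<^sup>+\<omega>. ennreal (Aop d s (cls L) (Y \<omega>)) \<partial>M)"
proof -
  have YM[measurable]: "Y \<in> borel_measurable M" using measurable_from_subalg[OF sub Ym] .
  have "(\<integral>\<^sup>+\<omega>. ennreal (cls L (Y \<omega> + X \<omega>)) \<partial>M) \<le> (\<integral>\<^sup>+\<omega>. ennreal (\<Sum>(a, r)\<leftarrow>L. a * Gm d s (Y \<omega> - r)) \<partial>M)"
    using L
  proof (induction L)
    case Nil then show ?case by simp
  next
    case (Cons p L)
    obtain a r where p: "p = (a, r)" by (cases p)
    have a: "a \<ge> 0" "nnw L" using Cons.prems p by auto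
    have c0: "0 \<le> s / (d\<^sup>2 + s)" "0 \<le> d\<^sup>2 / (d\<^sup>2 + s)" using dpos spos by (auto intro: divide_nonneg_nonneg)
    have sn: "0 \<le> (\<Sum>(a, r)\<leftarrow>L. a * Gm d s (y - r))" for y
      using a(2) c0 unfolding Aop_cls[symmetric] Aop_def
      by (intro add_nonneg_nonneg mult_nonneg_nonneg cls_nonneg) auto
    have sm[measurable]: "(\<lambda>y. (\<Sum>(a, r)\<leftarrow>L. a * Gm d s (y - r))) \<in> borel_measurable borel"
      unfolding Aop_cls[symmetric, abs_def] Aop_def by measurable
    have "(\<integral>\<^sup>+\<omega>. ennreal (cls (p # L) (Y \<omega> + X \<omega>)) \<partial>M)
        = (\<integral>\<^sup>+\<omega>. ennreal a * ennreal ((max 0 (Y \<omega> + X \<omega> - r))\<^sup>2) + ennreal (cls L (Y \<omega> + X \<omega>)) \<partial>M)"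
      using a by (intro nn_integral_cong) (simp add: p ennreal_mult ennreal_plus cls_nonneg algebra_simps)
    also have "\<dots> = ennreal a * (\<integral>\<^sup>+\<omega>. ennreal ((max 0 (Y \<omega> + X \<omega> - r))\<^sup>2) \<partial>M) + (\<integral>\<^sup>+\<omega>. ennreal (cls L (Y \<omega> + X \<omega>)) \<partial>M)"
      by (simp add: nn_integral_add nn_integral_cmult)
    also have "\<dots> \<le> ennreal a * (\<integral>\<^sup>+\<omega>. ennreal (Gm d s (Y \<omega> - r)) \<partial>M) + (\<integral>\<^sup>+\<omega>. ennreal (\<Sum>(a, r)\<leftarrow>L. a * Gm d s (Y \<omega> - r)) \<partial>M)"
      using Cons.IH[OF a(2)] one_step[OF P sub Ym Xm Xi Xd Xc Xv dpos spos, of r]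
      by (intro add_mono mult_left_mono) auto
    also have "\<dots> = (\<integral>\<^sup>+\<omega>. ennreal a * ennreal (Gm d s (Y \<omega> - r)) + ennreal (\<Sum>(a, r)\<leftarrow>L. a * Gm d s (Y \<omega> - r)) \<partial>M)"
      by (simp add: nn_integral_add nn_integral_cmult)
    also have "\<dots> = (\<integral>\<^sup>+\<omega>. ennreal (\<Sum>(a, r)\<leftarrow>p # L. a * Gm d s (Y \<omega> - r)) \<partial>M)"
      using a Gm_nonneg[OF dpos spos] sn
      by (intro nn_integral_cong) (simp add: p ennreal_mult ennreal_plus)
    finally show ?case .
  qed
  then show ?thesis unfolding Aop_cls .
qed




fun Tl :: "(nat \<Rightarrow> real) \<Rightarrow> (nat \<Rightarrow> real) \<Rightarrow> nat \<Rightarrow> nat \<Rightarrow> (real \<Rightarrow> real) \<Rightarrow> real \<Rightarrow> real" where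
  "Tl d \<sigma> n 0 h = h"
| "Tl d \<sigma> n (Suc m) h = Aop (d (n - m)) ((\<sigma> (n - m))\<^sup>2) (Tl d \<sigma> n m h)"

lemma Tl_cls:
  assumes "nnw L" "\<And>i. i \<ge> 1 \<Longrightarrow> d i > 0 \<and> \<sigma> i > 0"
  shows "m \<le> n \<Longrightarrow> \<exists>L'. nnw L' \<and> Tl d \<sigma> n m (cls L) = cls L'"
proof (induction m)
  case 0 then show ?case using assms by auto
next
  case (Suc m)
  then obtain L' where L': "nnw L'" "Tl d \<sigma> n m (cls L) = cls L'" by auto
  have nm: "n - m \<ge> 1" using Suc.prems by simp
  have "d (n - m) > 0" "(\<sigma> (n - m))\<^sup>2 > 0" using assms(2)[OF nm] by auto
  from Aop_cls_ex[OF L'(1) this] show ?case using L' by simp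
qed

lemma M_side:
  fixes M :: "'a measure" and H :: "nat \<Rightarrow> 'a measure" and S :: "nat \<Rightarrow> 'a \<Rightarrow> real"
    and d \<sigma> :: "nat \<Rightarrow> real"
  assumes P: "prob_space M"
    and SM: "supermartingale M H S"
    and S0: "AE \<omega> in M. S 0 \<omega> \<le> 0"
    and ds: "\<And>i. i \<ge> 1 \<Longrightarrow> d i > 0 \<and> \<sigma> i > 0"
    and Xd: "\<And>i. i \<ge> 1 \<Longrightarrow> AE \<omega> in M. S i \<omega> - S (i - 1) \<omega> \<le> d i"
    and Xv: "\<And>i. i \<ge> 1 \<Longrightarrow> AE \<omega> in M.
            cond_var M (H (i - 1)) (\<lambda>\<omega>. S i \<omega> - S (i - 1) \<omega>) \<omega> \<le> ennreal ((\<sigma> i)\<^sup>2)"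
    and L: "nnw L"
  shows "(\<integral>\<^sup>+\<omega>. ennreal (cls L (S n \<omega>)) \<partial>M) \<le> ennreal (Tl d \<sigma> n n (cls L) 0)"
proof -
  interpret prob_space M by fact
  have filt: "\<And>i. subalgebra M (H i)" using SM unfolding supermartingale_def filtration_def by auto
  have Sm: "\<And>i. S i \<in> borel_measurable (H i)" "\<And>i. integrable M (S i)"
    and Sc: "\<And>i. AE \<omega> in M. real_cond_exp M (H i) (S (Suc i)) \<omega> \<le> S i \<omega>"
    using SM unfolding supermartingale_def by auto
  have SMm[measurable]: "\<And>i. S i \<in> borel_measurable M" using measurable_from_subalg[OF filt Sm(1)] .
  have step: "m \<le> n \<longrightarrow> (\<integral>\<^sup>+\<omega>. ennreal (cls L (S n \<omega>)) \<partial>M) \<le> (\<integral>\<^sup>+\<omega>. ennreal (Tl d \<sigma> n m (cls L) (S (n - m) \<omega>)) \<partial>M)" for m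
  proof (induction m)
    case 0 then show ?case by simp
  next
    case (Suc m)
    show ?case
    proof
      assume mn: "Suc m \<le> n"
      define k where "k = n - m"
      have k1: "k \<ge> 1" and km: "k - 1 = n - Suc m" and kS: "Suc (k - 1) = k" using mn unfolding k_def by auto
      obtain L' where L': "nnw L'" "Tl d \<sigma> n m (cls L) = cls L'" using Tl_cls[where L=L and d=d and \<sigma>=\<sigma> and m=m and n=n, OF L ds] mn by auto
      interpret sigma_finite_subalgebra M "H (k - 1)"
        by (rule finite_measure_subalgebra_is_sigma_finite)
           (simp add: finite_measure_subalgebra_def finite_measure_subalgebra_axioms_def filt finite_measure_axioms)
      have Xc: "AE \<omega> in M. real_cond_exp M (H (k - 1)) (\<lambda>\<omega>. S k \<omega> - S (k - 1) \<omega>) \<omega> \<le> 0"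
      proof -
        have "AE \<omega> in M. real_cond_exp M (H (k - 1)) (S (Suc (k - 1))) \<omega> \<le> S (k - 1) \<omega>" by (rule Sc)
        moreover have "AE \<omega> in M. real_cond_exp M (H (k - 1)) (\<lambda>\<omega>. S k \<omega> - S (k - 1) \<omega>) \<omega>
            = real_cond_exp M (H (k - 1)) (S k) \<omega> - real_cond_exp M (H (k - 1)) (S (k - 1)) \<omega>"
          by (rule real_cond_exp_diff) (auto simp: Sm)
        moreover have "AE \<omega> in M. real_cond_exp M (H (k - 1)) (S (k - 1)) \<omega> = S (k - 1) \<omega>"
          by (rule real_cond_exp_F_meas) (auto simp: Sm)
        ultimately show ?thesis unfolding kS by eventually_elim auto
      qed
      have "(\<integral>\<^sup>+\<omega>. ennreal (cls L (S n \<omega>)) \<partial>M) \<le> (\<integral>\<^sup>+\<omega>. ennreal (cls L' (S k \<omega>)) \<partial>M)"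
        using Suc mn L' unfolding k_def by auto
      also have "\<dots> = (\<integral>\<^sup>+\<omega>. ennreal (cls L' (S (k - 1) \<omega> + (S k \<omega> - S (k - 1) \<omega>))) \<partial>M)" by simp
      also have "\<dots> \<le> (\<integral>\<^sup>+\<omega>. ennreal (Aop (d k) ((\<sigma> k)\<^sup>2) (cls L') (S (k - 1) \<omega>)) \<partial>M)"
        by (rule one_step_cls[OF P filt Sm(1)]) (use Sm Xc Xd[OF k1] Xv[OF k1] ds[OF k1] L' in auto)
      also have "\<dots> = (\<integral>\<^sup>+\<omega>. ennreal (Tl d \<sigma> n (Suc m) (cls L) (S (n - Suc m) \<omega>)) \<partial>M)"
        using L' km unfolding k_def by simp
      finally show "(\<integral>\<^sup>+\<omega>. ennreal (cls L (S n \<omega>)) \<partial>M) \<le> (\<integral>\<^sup>+\<omega>. ennreal (Tl d \<sigma> n (Suc m) (cls L) (S (n - Suc m) \<omega>)) \<partial>M)" .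
    qed
  qed
  obtain L'' where L'': "nnw L''" "Tl d \<sigma> n n (cls L) = cls L''" using Tl_cls[where L=L and d=d and \<sigma>=\<sigma> and m=n and n=n, OF L ds] by auto
  have "(\<integral>\<^sup>+\<omega>. ennreal (cls L (S n \<omega>)) \<partial>M) \<le> (\<integral>\<^sup>+\<omega>. ennreal (cls L'' (S 0 \<omega>)) \<partial>M)"
    using step[of n] L'' by simp
  also have "\<dots> \<le> (\<integral>\<^sup>+\<omega>. ennreal (cls L'' 0) \<partial>M)"
    by (rule nn_integral_mono_AE) (use S0 in \<open>eventually_elim, auto intro: ennreal_leI cls_mono[OF L''(1)]\<close>)
  also have "\<dots> = ennreal (cls L'' 0)" by (simp add: emeasure_space_1)
  finally show ?thesis using L'' by simp
qed




fun Bop :: "(nat \<Rightarrow> real) \<Rightarrow> (nat \<Rightarrow> real) \<Rightarrow> nat \<Rightarrow> (real \<Rightarrow> real) \<Rightarrow> real \<Rightarrow> real" where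
  "Bop d \<sigma> 0 h = h"
| "Bop d \<sigma> (Suc k) h = Bop d \<sigma> k (Aop (d (Suc k)) ((\<sigma> (Suc k))\<^sup>2) h)"

lemma Tl_Suc: "Tl d \<sigma> (Suc n) (Suc m) h = Tl d \<sigma> n m (Aop (d (Suc n)) ((\<sigma> (Suc n))\<^sup>2) h)"
  by (induction m) auto

lemma Tl_Bop: "Tl d \<sigma> n n h = Bop d \<sigma> n h"
  by (induction n arbitrary: h) (simp_all del: Tl.simps(2) add: Tl_Suc)

lemma two_point:
  fixes V :: "'b \<Rightarrow> real" and \<phi> :: "real \<Rightarrow> ennreal"
  assumes P: "prob_space N" and Vm[measurable]: "V \<in> borel_measurable N"
    and pa: "measure N {x \<in> space N. V x = a} = p" and pb: "measure N {x \<in> space N. V x = b} = q"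
    and pq: "p + q = 1" and ab: "a \<noteq> b"
  shows "(\<integral>\<^sup>+x. \<phi> (V x) \<partial>N) = ennreal p * \<phi> a + ennreal q * \<phi> b"
proof -
  interpret prob_space N by fact
  define Ea where "Ea = {x \<in> space N. V x = a}"
  define Eb where "Eb = {x \<in> space N. V x = b}"
  have [measurable]: "Ea \<in> sets N" "Eb \<in> sets N" unfolding Ea_def Eb_def by measurable
  have dis: "Ea \<inter> Eb = {}" unfolding Ea_def Eb_def using ab by auto
  have "prob (Ea \<union> Eb) = 1" using finite_measure_Union[of Ea Eb] dis pa pb pq unfolding Ea_def Eb_def by simp
  then have AE: "AE x in N. x \<in> Ea \<union> Eb" by (rule AE_prob_1)
  have "(\<integral>\<^sup>+x. \<phi> (V x) \<partial>N) = (\<integral>\<^sup>+x. \<phi> a * indicator Ea x + \<phi> b * indicator Eb x \<partial>N)"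
  proof (rule nn_integral_cong_AE)
    show "AE x in N. \<phi> (V x) = \<phi> a * indicator Ea x + \<phi> b * indicator Eb x"
      using AE by eventually_elim (use dis in \<open>auto simp: Ea_def Eb_def indicator_def\<close>)
  qed
  also have "\<dots> = \<phi> a * emeasure N Ea + \<phi> b * emeasure N Eb"
    by (simp add: nn_integral_add nn_integral_cmult_indicator)
  also have "\<dots> = ennreal p * \<phi> a + ennreal q * \<phi> b"
    using pa pb unfolding Ea_def Eb_def by (simp add: emeasure_eq_measure mult.commute)
  finally show ?thesis .
qed

lemma Aop_meas[measurable]: assumes [measurable]: "h \<in> borel_measurable borel" shows "Aop d s h \<in> borel_measurable borel"
  unfolding Aop_def by measurable

lemma Aop_nonneg: "(\<And>x. h x \<ge> 0) \<Longrightarrow> d > 0 \<Longrightarrow> s > 0 \<Longrightarrow> Aop d s h y \<ge> 0"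
  unfolding Aop_def by (intro add_nonneg_nonneg mult_nonneg_nonneg) auto

lemma N_side:
  fixes N :: "'b measure" and Z :: "nat \<Rightarrow> 'b \<Rightarrow> real" and d \<sigma> :: "nat \<Rightarrow> real"
  assumes P: "prob_space N" and ind: "prob_space.indep_vars N (\<lambda>_. borel) Z {1..n}"
    and pr: "\<forall>i \<in> {1..n}. measure N {x \<in> space N. Z i x = d i} = (\<sigma> i)\<^sup>2 / ((d i)\<^sup>2 + (\<sigma> i)\<^sup>2) \<and>
                         measure N {x \<in> space N. Z i x = - (\<sigma> i)\<^sup>2 / d i} = (d i)\<^sup>2 / ((d i)\<^sup>2 + (\<sigma> i)\<^sup>2)"
    and ds: "\<And>i. i \<ge> 1 \<Longrightarrow> d i > 0 \<and> \<sigma> i > 0"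
  shows "k \<le> n \<Longrightarrow> h \<in> borel_measurable borel \<Longrightarrow> (\<And>x. h x \<ge> 0) \<Longrightarrow>
     (\<integral>\<^sup>+\<omega>. ennreal (h (x + (\<Sum>i=1..k. Z i \<omega>))) \<partial>N) = ennreal (Bop d \<sigma> k h x)"
proof (induction k arbitrary: h x)
  case 0
  interpret prob_space N by fact
  show ?case by (simp add: emeasure_space_1)
next
  case (Suc k)
  interpret prob_space N by fact
  have hm[measurable]: "h \<in> borel_measurable borel" by fact
  have Zm[measurable]: "Z i \<in> borel_measurable N" if "i \<in> {1..n}" for i
    using ind that unfolding indep_vars_def by auto
  have k1: "Suc k \<ge> 1" "Suc k \<in> {1..n}" using Suc.prems by auto
  define V where "V = Z (Suc k)"
  define U where "U = (\<lambda>\<omega>. \<Sum>i=1..k. Z i \<omega>)"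
  have Vm[measurable]: "V \<in> borel_measurable N" unfolding V_def using Zm k1 by auto
  have Um[measurable]: "U \<in> borel_measurable N" unfolding U_def using Zm Suc.prems
    by (intro borel_measurable_sum) auto
  have ind2: "indep_vars (\<lambda>_. borel) Z (insert (Suc k) {1..k})"
    by (rule indep_vars_subset[OF ind]) (use Suc.prems in auto)
  have iv: "indep_var borel V borel U" unfolding V_def U_def
    by (rule indep_vars_sum[OF _ _ ind2]) auto
  have distr_eq: "distr N borel V \<Otimes>\<^sub>M distr N borel U = distr N (borel \<Otimes>\<^sub>M borel) (\<lambda>x. (V x, U x))"
    using iv unfolding indep_var_distribution_eq by auto
  interpret PS: pair_sigma_finite "distr N borel V" "distr N borel U"
    by (simp add: pair_sigma_finite_def prob_space_distr prob_space_imp_sigma_finite)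
  define dd where "dd = d (Suc k)"
  define ss where "ss = (\<sigma> (Suc k))\<^sup>2"
  have ddp: "dd > 0" and ssp: "ss > 0" using ds[OF k1(1)] unfolding dd_def ss_def by auto
  define A where "A = Aop dd ss h"
  have Am[measurable]: "A \<in> borel_measurable borel" unfolding A_def by measurable
  have Ann: "A y \<ge> 0" for y unfolding A_def using Aop_nonneg[OF Suc.prems(3) ddp ssp] .
  have inner: "(\<integral>\<^sup>+v. ennreal (h (x + u + v)) \<partial>distr N borel V) = ennreal (A (x + u))" for u
  proof -
    have "(\<integral>\<^sup>+v. ennreal (h (x + u + v)) \<partial>distr N borel V) = (\<integral>\<^sup>+\<omega>. ennreal (h (x + u + V \<omega>)) \<partial>N)"
      by (rule nn_integral_distr) auto
    also have "\<dots> = ennreal (ss / (dd\<^sup>2 + ss)) * ennreal (h (x + u + dd)) + ennreal (dd\<^sup>2 / (dd\<^sup>2 + ss)) * ennreal (h (x + u + (- ss / dd)))"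
    proof (rule two_point[OF P Vm])
      show "measure N {\<omega> \<in> space N. V \<omega> = dd} = ss / (dd\<^sup>2 + ss)"
        using pr k1 unfolding V_def dd_def ss_def by auto
      show "measure N {\<omega> \<in> space N. V \<omega> = - ss / dd} = dd\<^sup>2 / (dd\<^sup>2 + ss)"
        using pr k1 unfolding V_def dd_def ss_def by auto
      have "dd\<^sup>2 + ss > 0" using ddp ssp by (simp add: add_pos_pos)
      then show "ss / (dd\<^sup>2 + ss) + dd\<^sup>2 / (dd\<^sup>2 + ss) = 1" by (simp add: add_divide_distrib[symmetric])
      show "dd \<noteq> - ss / dd" using ddp ssp proof -
        have "- ss / dd < 0" using ddp ssp by (simp add: divide_neg_pos)
        then show ?thesis using ddp by linarith
      qed
    qed
    also have "\<dots> = ennreal (A (x + u))"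
      proof -
        have c: "0 \<le> ss / (dd\<^sup>2 + ss)" "0 \<le> dd\<^sup>2 / (dd\<^sup>2 + ss)" "0 \<le> h (x + u + dd)" "0 \<le> h (x + u - ss / dd)"
          using ddp ssp Suc.prems(3) by auto
        have e: "x + u + (- ss / dd) = x + u - ss / dd" by simp
        have "ennreal (ss / (dd\<^sup>2 + ss)) * ennreal (h (x + u + dd)) + ennreal (dd\<^sup>2 / (dd\<^sup>2 + ss)) * ennreal (h (x + u - ss / dd))
          = ennreal (ss / (dd\<^sup>2 + ss) * h (x + u + dd)) + ennreal (dd\<^sup>2 / (dd\<^sup>2 + ss) * h (x + u - ss / dd))"
          by (simp only: ennreal_mult[OF c(1) c(3)] ennreal_mult[OF c(2) c(4)])
        also have "\<dots> = ennreal (ss / (dd\<^sup>2 + ss) * h (x + u + dd) + dd\<^sup>2 / (dd\<^sup>2 + ss) * h (x + u - ss / dd))"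
          using c by (intro ennreal_plus[symmetric] mult_nonneg_nonneg)
        finally show ?thesis unfolding A_def Aop_def e .
      qed
    finally show ?thesis .
  qed
  have "(\<integral>\<^sup>+\<omega>. ennreal (h (x + (\<Sum>i=1..Suc k. Z i \<omega>))) \<partial>N) = (\<integral>\<^sup>+\<omega>. ennreal (h (x + U \<omega> + V \<omega>)) \<partial>N)"
    unfolding U_def V_def by (simp add: add.assoc)
  also have "\<dots> = (\<integral>\<^sup>+p. ennreal (h (x + snd p + fst p)) \<partial>distr N (borel \<Otimes>\<^sub>M borel) (\<lambda>\<omega>. (V \<omega>, U \<omega>)))"
    by (subst nn_integral_distr) auto
  also have "\<dots> = (\<integral>\<^sup>+p. ennreal (h (x + snd p + fst p)) \<partial>(distr N borel V \<Otimes>\<^sub>M distr N borel U))"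
    unfolding distr_eq ..
  also have "\<dots> = (\<integral>\<^sup>+u. (\<integral>\<^sup>+v. ennreal (h (x + u + v)) \<partial>distr N borel V) \<partial>distr N borel U)"
    proof -
      have "(\<lambda>p. ennreal (h (x + snd p + fst p))) \<in> borel_measurable (distr N borel V \<Otimes>\<^sub>M distr N borel U)"
        by measurable
      from PS.nn_integral_snd[OF this] show ?thesis by simp
    qed
  also have "\<dots> = (\<integral>\<^sup>+u. ennreal (A (x + u)) \<partial>distr N borel U)" by (simp add: inner)
  also have "\<dots> = (\<integral>\<^sup>+\<omega>. ennreal (A (x + U \<omega>)) \<partial>N)" by (rule nn_integral_distr) auto
  also have "\<dots> = ennreal (Bop d \<sigma> k A x)" unfolding U_def
    using Suc.IH[OF _ Am Ann] Suc.prems by simp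
  finally show ?case unfolding A_def dd_def ss_def by simp
qed




lemma F2_sigma_finite:
  assumes mu: "sets \<mu> = sets borel" and fu: "\<And>u. ennreal (f u) = (\<integral>\<^sup>+ t. ennreal ((max 0 (u - t))\<^sup>2) \<partial>\<mu>)"
  shows "sigma_finite_measure \<mu>"
proof (rule sigma_finite_measure.intro)
  have sp: "space \<mu> = UNIV" using sets_eq_imp_space_eq[OF mu] by simp
  show "\<exists>A. countable A \<and> A \<subseteq> sets \<mu> \<and> \<Union> A = space \<mu> \<and> (\<forall>a\<in>A. emeasure \<mu> a \<noteq> \<infinity>)"
  proof (intro exI[of _ "range (\<lambda>k::nat. {..real k})"] conjI ballI)
    show "countable (range (\<lambda>k::nat. {..real k}))" by simp
    show "range (\<lambda>k::nat. {..real k}) \<subseteq> sets \<mu>" unfolding mu by auto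
    show "\<Union> (range (\<lambda>k::nat. {..real k})) = space \<mu>"
      unfolding sp
    proof -
      have "t \<in> {..real (nat \<lceil>t\<rceil>)}" for t using real_nat_ceiling_ge[of t] by simp
      then show "\<Union> (range (\<lambda>k::nat. {..real k})) = UNIV" by blast
    qed
    fix a assume "a \<in> range (\<lambda>k::nat. {..real k})"
    then obtain k :: nat where a: "a = {..real k}" by auto
    have am: "a \<in> sets \<mu>" unfolding mu a by simp
    have "emeasure \<mu> a = (\<integral>\<^sup>+ t. indicator a t \<partial>\<mu>)" using am by simp
    also have "\<dots> \<le> (\<integral>\<^sup>+ t. ennreal ((max 0 (real k + 1 - t))\<^sup>2) \<partial>\<mu>)"
    proof (rule nn_integral_mono)
      fix t
      show "indicator a t \<le> ennreal ((max 0 (real k + 1 - t))\<^sup>2)"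
      proof (cases "t \<in> a")
        case True
        then have "1 \<le> max 0 (real k + 1 - t)" using a by auto
        then have "1 \<le> (max 0 (real k + 1 - t))\<^sup>2" by (simp add: one_le_power)
        then show ?thesis using True by simp
      qed simp
    qed
    also have "\<dots> = ennreal (f (real k + 1))" by (rule fu[symmetric])
    finally show "emeasure \<mu> a \<noteq> \<infinity>" by (auto simp: top_unique)
  qed
qed

theorem theorem2p1:
  fixes M :: "'a measure" and H :: "nat \<Rightarrow> 'a measure" and S :: "nat \<Rightarrow> 'a \<Rightarrow> real"
    and d \<sigma> :: "nat \<Rightarrow> real"
  assumes "prob_space M"
    and "supermartingale M H S"
    and "AE \<omega> in M. S 0 \<omega> \<le> 0"
    and "\<And>i. i \<ge> 1 \<Longrightarrow> d i > 0 \<and> \<sigma> i > 0"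
    and "\<And>i. i \<ge> 1 \<Longrightarrow> AE \<omega> in M. S i \<omega> - S (i - 1) \<omega> \<le> d i"
    and "\<And>i. i \<ge> 1 \<Longrightarrow> AE \<omega> in M.
            cond_var M (H (i - 1)) (\<lambda>\<omega>. S i \<omega> - S (i - 1) \<omega>) \<omega> \<le> ennreal ((\<sigma> i)\<^sup>2)"
  shows "\<forall>n \<ge> 1. \<forall>f \<in> F2plus. \<forall>(N :: 'b measure) (Z :: nat \<Rightarrow> 'b \<Rightarrow> real).
           prob_space N \<and>
           prob_space.indep_vars N (\<lambda>_. borel) Z {1..n} \<and>
           (\<forall>i \<in> {1..n}. measure N {x \<in> space N. Z i x = d i} = (\<sigma> i)\<^sup>2 / ((d i)\<^sup>2 + (\<sigma> i)\<^sup>2) \<and>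
                         measure N {x \<in> space N. Z i x = - (\<sigma> i)\<^sup>2 / d i} = (d i)\<^sup>2 / ((d i)\<^sup>2 + (\<sigma> i)\<^sup>2))
           \<longrightarrow> (\<integral>\<^sup>+ \<omega>. ennreal (f (S n \<omega>)) \<partial>M) \<le> (\<integral>\<^sup>+ x. ennreal (f (\<Sum>i = 1..n. Z i x)) \<partial>N)"
proof (intro allI impI ballI)
  fix n :: nat and f and N :: "'b measure" and Z :: "nat \<Rightarrow> 'b \<Rightarrow> real"
  assume n1: "n \<ge> 1" and fF: "f \<in> F2plus"
  assume HN: "prob_space N \<and>
           prob_space.indep_vars N (\<lambda>_. borel) Z {1..n} \<and>
           (\<forall>i \<in> {1..n}. measure N {x \<in> space N. Z i x = d i} = (\<sigma> i)\<^sup>2 / ((d i)\<^sup>2 + (\<sigma> i)\<^sup>2) \<and>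
                         measure N {x \<in> space N. Z i x = - (\<sigma> i)\<^sup>2 / d i} = (d i)\<^sup>2 / ((d i)\<^sup>2 + (\<sigma> i)\<^sup>2))"
  have PN: "prob_space N" and ind: "prob_space.indep_vars N (\<lambda>_. borel) Z {1..n}"
    and pr: "\<forall>i \<in> {1..n}. measure N {x \<in> space N. Z i x = d i} = (\<sigma> i)\<^sup>2 / ((d i)\<^sup>2 + (\<sigma> i)\<^sup>2) \<and>
                         measure N {x \<in> space N. Z i x = - (\<sigma> i)\<^sup>2 / d i} = (d i)\<^sup>2 / ((d i)\<^sup>2 + (\<sigma> i)\<^sup>2)"
    using HN by auto
  obtain \<mu> :: "real measure" where mu: "sets \<mu> = sets borel"
    and fu: "\<And>u. ennreal (f u) = (\<integral>\<^sup>+ t. ennreal ((max 0 (u - t))\<^sup>2) \<partial>\<mu>)"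
    using fF unfolding F2plus_def by blast
  interpret mu: sigma_finite_measure \<mu> using F2_sigma_finite[OF mu fu] .
  interpret PM: prob_space M by fact
  interpret PNN: prob_space N by (rule PN)
  interpret PMmu: pair_sigma_finite M \<mu>
    by (simp add: pair_sigma_finite_def PM.sigma_finite_measure_axioms mu.sigma_finite_measure_axioms)
  interpret PNmu: pair_sigma_finite N \<mu>
    by (simp add: pair_sigma_finite_def PNN.sigma_finite_measure_axioms mu.sigma_finite_measure_axioms)
  have Sn[measurable]: "S n \<in> borel_measurable M"
    using assms(2) unfolding supermartingale_def filtration_def
    proof -
      have SMd: "filtration M H \<and> (\<forall>i. S i \<in> borel_measurable (H i) \<and> integrable M (S i) \<and>
          (AE \<omega> in M. real_cond_exp M (H i) (S (Suc i)) \<omega> \<le> S i \<omega>))"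
        using assms(2) unfolding supermartingale_def .
      have "subalgebra M (H n)" using conjunct1[OF SMd] unfolding filtration_def by (rule conjE) (erule allE)
      moreover have "S n \<in> borel_measurable (H n)" using conjunct1[OF spec[OF conjunct2[OF SMd], of n]] .
      ultimately show ?thesis by (rule measurable_from_subalg)
    qed
  have Zm[measurable]: "Z i \<in> borel_measurable N" if "i \<in> {1..n}" for i
    using ind that unfolding PNN.indep_vars_def unfolding PNN.indep_vars_def by blast
  have Tm[measurable]: "(\<lambda>x. \<Sum>i = 1..n. Z i x) \<in> borel_measurable N"
    using Zm by (intro borel_measurable_sum) auto
  have msets: "sets (M' \<Otimes>\<^sub>M \<mu>) = sets (M' \<Otimes>\<^sub>M borel)" for M' :: "'c measure"
    by (rule sets_pair_measure_cong) (rule refl, rule mu)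
  have meas: "(\<lambda>p. ennreal ((max 0 (g (fst p) - snd p))\<^sup>2)) \<in> borel_measurable (M' \<Otimes>\<^sub>M \<mu>)"
    if [measurable]: "g \<in> borel_measurable M'" for g and M' :: "'c measure"
  proof -
    have "(\<lambda>p. ennreal ((max 0 (g (fst p) - snd p))\<^sup>2)) \<in> borel_measurable (M' \<Otimes>\<^sub>M borel)"
      by measurable
    then show ?thesis by (subst measurable_cong_sets[OF msets[of M'] refl])
  qed
  define L where "L = [(1::real, 0::real)]"
  have pointwise: "(\<integral>\<^sup>+\<omega>. ennreal ((max 0 (S n \<omega> - t))\<^sup>2) \<partial>M) \<le> (\<integral>\<^sup>+x. ennreal ((max 0 ((\<Sum>i = 1..n. Z i x) - t))\<^sup>2) \<partial>N)" for t
  proof -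
    define Lt where "Lt = [(1::real, t)]"
    have Lt: "nnw Lt" unfolding Lt_def by simp
    have c: "cls Lt y = (max 0 (y - t))\<^sup>2" for y unfolding Lt_def by simp
    have "(\<integral>\<^sup>+\<omega>. ennreal ((max 0 (S n \<omega> - t))\<^sup>2) \<partial>M) = (\<integral>\<^sup>+\<omega>. ennreal (cls Lt (S n \<omega>)) \<partial>M)"
      unfolding c ..
    also have "\<dots> \<le> ennreal (Tl d \<sigma> n n (cls Lt) 0)"
      by (rule M_side[OF assms Lt])
    also have "\<dots> = ennreal (Bop d \<sigma> n (cls Lt) 0)" by (simp only: Tl_Bop)
    also have "\<dots> = (\<integral>\<^sup>+x. ennreal (cls Lt (0 + (\<Sum>i = 1..n. Z i x))) \<partial>N)"
      by (rule N_side[OF PN ind pr assms(4), symmetric]) (auto simp: cls_nonneg[OF Lt])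
    also have "\<dots> = (\<integral>\<^sup>+x. ennreal ((max 0 ((\<Sum>i = 1..n. Z i x) - t))\<^sup>2) \<partial>N)"
      unfolding c by simp
    finally show ?thesis .
  qed
  have "(\<integral>\<^sup>+ \<omega>. ennreal (f (S n \<omega>)) \<partial>M) = (\<integral>\<^sup>+ \<omega>. (\<integral>\<^sup>+ t. ennreal ((max 0 (S n \<omega> - t))\<^sup>2) \<partial>\<mu>) \<partial>M)"
    by (simp only: fu)
  also have "\<dots> = (\<integral>\<^sup>+ t. (\<integral>\<^sup>+ \<omega>. ennreal ((max 0 (S n \<omega> - t))\<^sup>2) \<partial>M) \<partial>\<mu>)"
    using PMmu.Fubini'[of "\<lambda>\<omega> t. ennreal ((max 0 (S n \<omega> - t))\<^sup>2)"] meas[OF Sn] by (simp add: split_beta')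
  also have "\<dots> \<le> (\<integral>\<^sup>+ t. (\<integral>\<^sup>+x. ennreal ((max 0 ((\<Sum>i = 1..n. Z i x) - t))\<^sup>2) \<partial>N) \<partial>\<mu>)"
    by (rule nn_integral_mono) (rule pointwise)
  also have "\<dots> = (\<integral>\<^sup>+ x. (\<integral>\<^sup>+ t. ennreal ((max 0 ((\<Sum>i = 1..n. Z i x) - t))\<^sup>2) \<partial>\<mu>) \<partial>N)"
    using PNmu.Fubini'[of "\<lambda>x t. ennreal ((max 0 ((\<Sum>i = 1..n. Z i x) - t))\<^sup>2)"] meas[OF Tm] by (simp add: split_beta')
  also have "\<dots> = (\<integral>\<^sup>+ x. ennreal (f (\<Sum>i = 1..n. Z i x)) \<partial>N)"
    by (simp only: fu)
  finally show "(\<integral>\<^sup>+ \<omega>. ennreal (f (S n \<omega>)) \<partial>M) \<le> (\<integral>\<^sup>+ x. ennreal (f (\<Sum>i = 1..n. Z i x)) \<partial>N)" .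
qed


end
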